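(* Let $M,N\ge0$ be integers and let $\phi\in\mathcal{D}_N^M$ satisfy $\#L_\phi\le p^N$, where $L_\phi=\{l\in\{0,1,\dots,p^{M+N}-1\}:\ \widehat\phi(l/p^M)\ne0\}$. Then for every $b\in\mathbb{Q}_p$ there exist complex numbers $\alpha_{a,b}$, $a\in I_p$, only finitely many of them nonzero, such that $$\phi(x-b)=\sum_{a\in I_p}\alpha_{a,b}\,\phi(x-a)\qquad\text{for all }x\in\mathbb{Q}_p .$$
   Context: $p$ is a prime, $\mathbb{Q}_p$ the field of $p$-adic numbers with norm $|\cdot|_p$. The fractional part of $x=p^{\gamma}\sum_{j\ge0}x_jp^j$ ($x_j\in\{0,\dots,p-1\}$, $x_0\ne0$) is $\{x\}_p=p^{\gamma}\sum_{j=0}^{-\gamma-1}x_jp^j$, $\{0\}_p=0$; $\chi_p(x)=e^{2\pi i\{x\}_p}$; $I_p=\{a\in\mathbb{Q}_p:\{a\}_p=a\}$; $B_\gamma(a)=\{x:|x-a|_p\le p^\gamma\}$. $dx$ is Haar measure with $B_0(0)$ of measure $1$; $\widehat f(\xi)=\int\chi_p(\xi x)f(x)\,dx$. A test function is a locally constant compactly supported complex function. $\mathcal{D}_N^M$ is the set of test functions $\phi$ that are $p^M$-periodic ($\phi(x+p^M)=\phi(x)$) and supported in $B_N(0)$; equivalently, locally constant $\phi$ with $\operatorname{supp}\phi\subset B_N(0)$, $\operatorname{supp}\widehat\phi\subset B_M(0)$. *)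

theory Defs
  imports Complex_Main "HOL-Computational_Algebra.Primes"
begin

text \<open>p-adic numbers, represented by their digit sequences:
  x = sum over j of x_j p^j, with digits x_j in {0..p-1}, indexed by integers j,
  and x_j = 0 for all sufficiently negative j.\<close>

type_synonym padic = "int \<Rightarrow> int"

definition Qp :: "nat \<Rightarrow> padic set" where
  "Qp p = {x. (\<forall>j. 0 \<le> x j \<and> x j < int p) \<and> (\<exists>k. \<forall>j<k. x j = 0)}"

definition trunc :: "nat \<Rightarrow> padic \<Rightarrow> int \<Rightarrow> real" where
  "trunc p x n = (\<Sum>j\<in>{j. j < n \<and> x j \<noteq> 0}. real_of_int (x j) * real p powi j)"

definition padd :: "nat \<Rightarrow> padic \<Rightarrow> padic \<Rightarrow> padic" where
  "padd p x y = (\<lambda>n. \<lfloor>(trunc p x (n+1) + trunc p y (n+1)) / real p powi n\<rfloor> mod int p)"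

definition psub :: "nat \<Rightarrow> padic \<Rightarrow> padic \<Rightarrow> padic" where
  "psub p x y = (\<lambda>n. \<lfloor>(trunc p x (n+1) - trunc p y (n+1) + real p powi (n+1))
                         / real p powi n\<rfloor> mod int p)"

definition lowbd :: "padic \<Rightarrow> nat" where
  "lowbd x = (LEAST k::nat. \<forall>j < - int k. x j = 0)"

definition pmult :: "nat \<Rightarrow> padic \<Rightarrow> padic \<Rightarrow> padic" where
  "pmult p x y = (\<lambda>n. let m = n + 1 + int (lowbd x) + int (lowbd y) in
       \<lfloor>trunc p x m * trunc p y m / real p powi n\<rfloor> mod int p)"

text \<open>The p-adic number l / p^M (l, M natural numbers).\<close>
definition pnum :: "nat \<Rightarrow> nat \<Rightarrow> nat \<Rightarrow> padic" where
  "pnum p l M = (\<lambda>j. if j + int M \<ge> 0 then (int l div int p ^ nat (j + int M)) mod int p else 0)"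

definition pzero :: padic where "pzero = (\<lambda>_. 0)"

definition pnorm :: "nat \<Rightarrow> padic \<Rightarrow> real" where
  "pnorm p x = (if (\<forall>j. x j = 0) then 0
                else real p powi (- (THE g. x g \<noteq> 0 \<and> (\<forall>j<g. x j = 0))))"

definition pball :: "nat \<Rightarrow> int \<Rightarrow> padic \<Rightarrow> padic set" where
  "pball p g a = {x \<in> Qp p. pnorm p (psub p x a) \<le> real p powi g}"

definition pfrac :: "nat \<Rightarrow> padic \<Rightarrow> real" where
  "pfrac p x = trunc p x 0"

definition pchi :: "nat \<Rightarrow> padic \<Rightarrow> complex" where
  "pchi p x = cis (2 * pi * pfrac p x)"

definition Ip :: "nat \<Rightarrow> padic set" where
  "Ip p = {a \<in> Qp p. \<forall>j\<ge>0. a j = 0}"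

text \<open>Haar integral of test functions: limit of Riemann sums over the cosets of
  B_{-K}(0) in B_K(0), each of measure p^{-K} (normalised so that B_0(0) has measure 1);
  for test functions the sequence is eventually constant.\<close>
definition reps :: "nat \<Rightarrow> nat \<Rightarrow> padic set" where
  "reps p K = {x \<in> Qp p. \<forall>j. (j < - int K \<or> j \<ge> int K) \<longrightarrow> x j = 0}"

definition pint :: "nat \<Rightarrow> (padic \<Rightarrow> complex) \<Rightarrow> complex" where
  "pint p f = lim (\<lambda>K::nat. (\<Sum>c\<in>reps p K. f c) * complex_of_real (real p powi (- int K)))"

definition fourier :: "nat \<Rightarrow> (padic \<Rightarrow> complex) \<Rightarrow> padic \<Rightarrow> complex" where
  "fourier p f \<xi> = pint p (\<lambda>x. pchi p (pmult p \<xi> x) * f x)"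

definition locally_constant :: "nat \<Rightarrow> (padic \<Rightarrow> complex) \<Rightarrow> bool" where
  "locally_constant p f = (\<forall>x\<in>Qp p. \<exists>g. \<forall>y\<in>pball p g x. f y = f x)"

definition test_function :: "nat \<Rightarrow> (padic \<Rightarrow> complex) \<Rightarrow> bool" where
  "test_function p f = (locally_constant p f \<and>
      (\<exists>N. \<forall>x\<in>Qp p. f x \<noteq> 0 \<longrightarrow> x \<in> pball p N pzero))"

definition DNM :: "nat \<Rightarrow> nat \<Rightarrow> nat \<Rightarrow> (padic \<Rightarrow> complex) set" where
  "DNM p N M = {f. test_function p f \<and>
      (\<forall>x\<in>Qp p. f (padd p x (pnum p (p ^ M) 0)) = f x) \<and>
      (\<forall>x\<in>Qp p. f x \<noteq> 0 \<longrightarrow> x \<in> pball p (int N) pzero)}"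

definition Lset :: "nat \<Rightarrow> nat \<Rightarrow> nat \<Rightarrow> (padic \<Rightarrow> complex) \<Rightarrow> nat set" where
  "Lset p N M f = {l \<in> {0..<p ^ (M + N)}. fourier p f (pnum p l M) \<noteq> 0}"

end

theory Submission
  imports Defs "HOL-Library.Real_Mod" "HOL-Computational_Algebra.Polynomial"
begin

lemma finite_below: "(\<forall>j<k. x j = 0) \<Longrightarrow> finite {j. j < n \<and> (x::int\<Rightarrow>int) j \<noteq> 0}"
  by (rule finite_subset[of _ "{k..<n}"]) (auto simp: not_less[symmetric])

lemma T_zero: "(\<forall>j<n. x j = 0) \<Longrightarrow> trunc p x n = 0"
  unfolding trunc_def by (simp)

lemma T_step:
  assumes "\<forall>j<k. x j = 0"
  shows "trunc p x (n+1) = trunc p x n + real_of_int (x n) * real p powi n"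
proof (cases "x n = 0")
  case True
  have "{j. j < n+1 \<and> x j \<noteq> 0} = {j. j < n \<and> x j \<noteq> 0}" using True
    by (auto, smt (verit))
  then show ?thesis using True by (simp add: trunc_def)
next
  case False
  have e: "{j. j < n+1 \<and> x j \<noteq> 0} = insert n {j. j < n \<and> x j \<noteq> 0}" using False
    by auto
  show ?thesis unfolding trunc_def e
    by (subst sum.insert) (auto intro: finite_below[OF assms])
qed

lemma Qp_lb: "x \<in> Qp p \<Longrightarrow> \<exists>k. \<forall>j<k. x j = 0"
  by (simp add: Qp_def)

lemma Qp_dig: "x \<in> Qp p \<Longrightarrow> 0 \<le> x j \<and> x j < int p"
  by (simp add: Qp_def)

lemma pw_pos: "1 < p \<Longrightarrow> 0 < real p powi n"
  by simp

lemma Tbound: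
  assumes p1: "1 < p" and x: "x \<in> Qp p"
  shows "0 \<le> trunc p x n \<and> trunc p x n < real p powi n"
proof -
  obtain k where k: "\<forall>j<k. x j = 0" using Qp_lb[OF x] by blast
  show ?thesis
  proof (cases "n \<le> k")
    case True then show ?thesis using T_zero[of n x p] k p1 by auto
  next
    case False
    then have "k \<le> n" by simp
    then show ?thesis
    proof (induction n rule: int_ge_induct)
      case base then show ?case using T_zero[of k x p] k p1 by auto
    next
      case (step n)
      have d: "0 \<le> x n" "x n \<le> int p - 1" using Qp_dig[OF x, of n] by auto
      have pn: "0 < real p powi n" using p1 by simp
      have "real_of_int (x n) * real p powi n \<le> (real p - 1) * real p powi n"
        using d pn by (intro mult_right_mono) auto
      moreover have "real p powi (n+1) = real p powi n * real p"
        using p1 by (simp add: power_int_add_1)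
      ultimately show ?case using step T_step[OF k, of p n] d pn
        by (auto simp: algebra_simps)
    qed
  qed
qed

definition pdv :: "nat \<Rightarrow> int \<Rightarrow> real \<Rightarrow> bool" where
  "pdv p k r = (\<exists>i::int. r = of_int i * real p powi k)"

lemma pdv_add: "pdv p k a \<Longrightarrow> pdv p k b \<Longrightarrow> pdv p k (a + b)"
  unfolding pdv_def by (metis distrib_right of_int_add)
lemma pdv_diff: "pdv p k a \<Longrightarrow> pdv p k b \<Longrightarrow> pdv p k (a - b)"
  unfolding pdv_def by (metis left_diff_distrib of_int_diff)
lemma pdv_0: "pdv p k 0"
  unfolding pdv_def by (rule exI[of _ 0]) simp
lemma pdv_int_mult: "pdv p k a \<Longrightarrow> pdv p k (of_int i * a)"
  unfolding pdv_def by (metis mult.assoc of_int_mult)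
lemma pdv_mono:
  assumes p1: "1 < p" and "pdv p k a" "j \<le> k"
  shows "pdv p j a"
proof -
  obtain i where i: "a = of_int i * real p powi k" using assms unfolding pdv_def by blast
  have "real p powi k = real p powi j * real p powi (k - j)"
    using p1 by (simp flip: power_int_add)
  also have "real p powi (k - j) = of_int (int p ^ nat (k - j))"
    using assms(3) by (simp add: power_int_def)
  finally show ?thesis unfolding pdv_def using i
    by (intro exI[of _ "i * int p ^ nat (k - j)"]) (simp add: algebra_simps)
qed
lemma pdv_self: "pdv p k (real p powi k)"
  unfolding pdv_def by (rule exI[of _ 1]) simp
lemma pdv_dig: "pdv p k (of_int d * real p powi k)"
  unfolding pdv_def by blast

lemma Tdiv:
  assumes p1: "1 < p" and x: "x \<in> Qp p" and mn: "m \<le> n"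
  shows "pdv p m (trunc p x n - trunc p x m)"
  using mn
proof (induction n rule: int_ge_induct)
  case base then show ?case by (simp add: pdv_0)
next
  case (step n)
  obtain k where k: "\<forall>j<k. x j = 0" using Qp_lb[OF x] by blast
  have "trunc p x (n+1) - trunc p x m = (trunc p x n - trunc p x m) + of_int (x n) * real p powi n"
    using T_step[OF k] by simp
  moreover have "pdv p m (of_int (x n) * real p powi n)"
    using pdv_mono[OF p1 pdv_dig step(1)] .
  ultimately show ?case using step pdv_add by metis
qed

lemma rmod_shift: "(x + of_int i * y) rmod y = x rmod y"
  by (metis add.right_neutral rmod_add rmod_rmod rmod_self_multiple_int)

lemma rmod_pdv:
  assumes "pdv p k (a - b)"
  shows "a rmod (real p powi k) = b rmod (real p powi k)"
proof -
  obtain i where "a - b = of_int i * real p powi k" using assms unfolding pdv_def by blast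
  then have "a = b + of_int i * real p powi k" by simp
  then show ?thesis by (simp add: rmod_shift)
qed

lemma rmod_pdv_0: "pdv p k a \<Longrightarrow> a rmod (real p powi k) = 0"
  using rmod_pdv[of p k a 0] by simp

lemma rmod_eqI:
  assumes p1: "1 < p" and "0 \<le> b" "b < real p powi k" "pdv p k (a - b)"
  shows "a rmod (real p powi k) = b"
  using rmod_pdv[OF assms(4)] assms(2,3) by simp

lemma Ttrunc:
  assumes p1: "1 < p" and x: "x \<in> Qp p" and mn: "m \<le> n"
  shows "trunc p x m = trunc p x n rmod (real p powi m)"
  using rmod_eqI[OF p1 _ _ Tdiv[OF p1 x mn]] Tbound[OF p1 x, of m] by simp

lemma Text:
  assumes x: "x \<in> Qp p" and y: "y \<in> Qp p" and p1: "1 < p"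
    and e: "\<forall>n. trunc p x n = trunc p y n"
  shows "x = y"
proof
  fix n
  obtain k where k: "\<forall>j<k. x j = 0" using Qp_lb[OF x] by blast
  obtain k' where k': "\<forall>j<k'. y j = 0" using Qp_lb[OF y] by blast
  have a: "of_int (x n) * real p powi n = trunc p x (n+1) - trunc p x n"
    using T_step[OF k, of p n] by simp
  have b: "of_int (y n) * real p powi n = trunc p y (n+1) - trunc p y n"
    using T_step[OF k', of p n] by simp
  have "of_int (x n) * real p powi n = of_int (y n) * real p powi n"
    unfolding a b using e by simp
  then show "x n = y n" using p1 by auto
qed

lemma Tlowdv:
  assumes p1: "1 < p" and x: "x \<in> Qp p" and k: "\<forall>j<k. x j = 0"
  shows "pdv p k (trunc p x n)"
proof (cases "n \<le> k")
  case True then show ?thesis using T_zero[of n x p] k by (simp add: pdv_0)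
next
  case False
  then have "k \<le> n" by simp
  then show ?thesis
  proof (induction n rule: int_ge_induct)
    case base then show ?case using T_zero[of k x p] k by (simp add: pdv_0)
  next
    case (step n)
    then show ?case using T_step[OF k, of p n] pdv_add pdv_mono[OF p1 pdv_dig step(1)] by metis
  qed
qed

lemma KEY:
  assumes m: "0 < m" and q: "0 < q"
  shows "A rmod m + of_int (\<lfloor>A/m\<rfloor> mod q) * m = A rmod (of_int q * m)"
proof -
  have r: "A rmod m = A - m * of_int \<lfloor>A/m\<rfloor>" using m by (simp add: rmod_def)
  have d: "\<lfloor>A/m\<rfloor> mod q = \<lfloor>A/m\<rfloor> - q * (\<lfloor>A/m\<rfloor> div q)" by (simp add: minus_div_mult_eq_mod[symmetric] algebra_simps)
  have "0 \<le> \<lfloor>A/m\<rfloor> mod q" "\<lfloor>A/m\<rfloor> mod q \<le> q - 1" using q by auto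
  then have b1: "0 \<le> of_int (\<lfloor>A/m\<rfloor> mod q) * m" "of_int (\<lfloor>A/m\<rfloor> mod q) * m \<le> (of_int q - 1) * m"
    using m by (auto intro!: mult_right_mono)
  have b2: "0 \<le> A rmod m" "A rmod m < m" using m by (auto simp: rmod_nonneg rmod_less)
  show ?thesis
  proof (rule sym, rule rmod_unique[where n = "\<lfloor>A/m\<rfloor> div q"])
    show "A rmod m + of_int (\<lfloor>A/m\<rfloor> mod q) * m \<in> {0..<\<bar>of_int q * m\<bar>}"
      using b1 b2 m q by (auto simp: algebra_simps)
    show "A = A rmod m + of_int (\<lfloor>A/m\<rfloor> mod q) * m + of_int (\<lfloor>A / m\<rfloor> div q) * (of_int q * m)"
      unfolding r d by (simp add: algebra_simps)
  qed
qed

lemma CH: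
  assumes p1: "1 < p"
    and dig: "\<forall>n\<ge>kk. z n = \<lfloor>W (n+1) / real p powi n\<rfloor> mod int p"
    and low: "\<forall>n<kk. z n = 0"
    and base: "\<forall>n\<le>kk. W n rmod real p powi n = 0"
    and inc: "\<forall>n\<ge>kk. pdv p n (W (n+1) - W n)"
  shows "z \<in> Qp p" "trunc p z n = W n rmod real p powi n"
proof -
  show "z \<in> Qp p" unfolding Qp_def
  proof (safe)
    fix j show "0 \<le> z j" "z j < int p" using dig low p1
      by (cases "j < kk"; force)+
  next
    show "\<exists>k. \<forall>j<k. z j = 0" using low by blast
  qed
  show "trunc p z n = W n rmod real p powi n"
  proof (cases "n \<le> kk")
    case True then show ?thesis using T_zero[of n z p] low base by simp
  next
    case False
    then have "kk \<le> n" by simp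
    then show ?thesis
    proof (induction n rule: int_ge_induct)
      case base then show ?case using T_zero[of kk z p] low assms(4) by simp
    next
      case (step n)
      have pn: "0 < real p powi n" using p1 by simp
      have "trunc p z (n+1) = W n rmod real p powi n + of_int (z n) * real p powi n"
        using T_step[OF low, of p n] step by simp
      also have "W n rmod real p powi n = W (n+1) rmod real p powi n"
        using rmod_pdv[OF inc[rule_format, OF step(1)]] by simp
      also have "z n = \<lfloor>W (n+1) / real p powi n\<rfloor> mod int p" using dig step(1) by simp
      also have "W (n+1) rmod real p powi n + real_of_int (\<lfloor>W (n+1) / real p powi n\<rfloor> mod int p) * real p powi n
          = W (n+1) rmod (of_int (int p) * real p powi n)"
        using KEY[OF pn, of "int p" "W (n+1)"] p1 by simp
      also have "of_int (int p) * real p powi n = real p powi (n+1)"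
        using p1 by (simp add: power_int_add_1')
      finally show ?case .
    qed
  qed
qed


lemma padd_lem:
  assumes p1: "1 < p" and x: "x \<in> Qp p" and y: "y \<in> Qp p"
  shows "padd p x y \<in> Qp p"
    "trunc p (padd p x y) n = (trunc p x n + trunc p y n) rmod real p powi n"
proof -
  obtain kx where kx: "\<forall>j<kx. x j = 0" using Qp_lb[OF x] by blast
  obtain ky where ky: "\<forall>j<ky. y j = 0" using Qp_lb[OF y] by blast
  define k0 where "k0 = min kx ky"
  have z: "\<And>n. n \<le> k0 \<Longrightarrow> trunc p x n = 0 \<and> trunc p y n = 0"
    using kx ky T_zero unfolding k0_def by (metis min.bounded_iff order_less_le_trans)
  have h1: "\<forall>n\<ge>k0. padd p x y n = \<lfloor>(trunc p x (n+1) + trunc p y (n+1)) / real p powi n\<rfloor> mod int p"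
    by (simp add: padd_def)
  have h2: "\<forall>n<k0. padd p x y n = 0" using z by (simp add: padd_def)
  have h3: "\<forall>n\<le>k0. (trunc p x n + trunc p y n) rmod real p powi n = 0" using z by simp
  have h4: "\<forall>n\<ge>k0. pdv p n (trunc p x (n + 1) + trunc p y (n + 1) - (trunc p x n + trunc p y n))"
  proof (intro allI impI)
    fix n :: int
    have "trunc p x (n + 1) + trunc p y (n + 1) - (trunc p x n + trunc p y n)
        = of_int (x n) * real p powi n + of_int (y n) * real p powi n"
      using T_step[OF kx, of p n] T_step[OF ky, of p n] by simp
    then show "pdv p n (trunc p x (n + 1) + trunc p y (n + 1) - (trunc p x n + trunc p y n))"
      by (simp add: pdv_add pdv_dig)
  qed
  have C: "padd p x y \<in> Qp p \<and> trunc p (padd p x y) n = (trunc p x n + trunc p y n) rmod real p powi n"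
    using CH[OF p1 h1 h2 h3 h4] by blast
  then show "padd p x y \<in> Qp p"
    "trunc p (padd p x y) n = (trunc p x n + trunc p y n) rmod real p powi n" by auto
qed

lemma psub_lem:
  assumes p1: "1 < p" and x: "x \<in> Qp p" and y: "y \<in> Qp p"
  shows "psub p x y \<in> Qp p"
    "trunc p (psub p x y) n = (trunc p x n - trunc p y n) rmod real p powi n"
proof -
  obtain kx where kx: "\<forall>j<kx. x j = 0" using Qp_lb[OF x] by blast
  obtain ky where ky: "\<forall>j<ky. y j = 0" using Qp_lb[OF y] by blast
  define k0 where "k0 = min kx ky"
  have z: "\<And>n. n \<le> k0 \<Longrightarrow> trunc p x n = 0 \<and> trunc p y n = 0"
    using kx ky T_zero unfolding k0_def by (metis min.bounded_iff order_less_le_trans)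
  have e1: "\<And>n. real p powi (n+1) = real p * real p powi n" using p1 by (simp add: power_int_add_1')
  have e2: "\<And>n. real p powi (1+n) = real p * real p powi n" using e1 by (simp add: add.commute)
  have h1: "\<forall>n\<ge>k0. psub p x y n = \<lfloor>(trunc p x (n+1) - trunc p y (n+1) + real p powi (n+1)) / real p powi n\<rfloor> mod int p"
    by (simp add: psub_def)
  have h2: "\<forall>n<k0. psub p x y n = 0"
  proof (intro allI impI)
    fix n assume "n < k0"
    then have "trunc p x (n+1) = 0" "trunc p y (n+1) = 0" using z by auto
    moreover have "real p powi (n+1) / real p powi n = of_int (int p)" using p1 e1 by simp
    ultimately show "psub p x y n = 0" unfolding psub_def by simp
  qed
  have h3: "\<forall>n\<le>k0. (trunc p x n - trunc p y n + real p powi n) rmod real p powi n = 0" using z by simp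
  have h4: "\<forall>n\<ge>k0. pdv p n (trunc p x (n + 1) - trunc p y (n + 1) + real p powi (n+1) - (trunc p x n - trunc p y n + real p powi n))"
  proof (intro allI impI)
    fix n :: int
    have eq: "trunc p x (n + 1) - trunc p y (n + 1) + real p powi (n+1) - (trunc p x n - trunc p y n + real p powi n)
        = of_int (x n - y n + int p - 1) * real p powi n"
      using T_step[OF kx, of p n] T_step[OF ky, of p n] e1[of n] by (simp add: algebra_simps)
    show "pdv p n (trunc p x (n + 1) - trunc p y (n + 1) + real p powi (n+1) - (trunc p x n - trunc p y n + real p powi n))"
      unfolding eq by (rule pdv_dig)
  qed
  have C: "psub p x y \<in> Qp p \<and> trunc p (psub p x y) n = (trunc p x n - trunc p y n + real p powi n) rmod real p powi n"
    using CH[OF p1 h1 h2 h3 h4] by blast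
  then show "psub p x y \<in> Qp p" by auto
  have "(trunc p x n - trunc p y n + real p powi n) = (trunc p x n - trunc p y n) + of_int 1 * real p powi n" by simp
  then show "trunc p (psub p x y) n = (trunc p x n - trunc p y n) rmod real p powi n"
    using C by (simp only: rmod_shift)
qed

lemma pnum_lem:
  assumes p1: "1 < p"
  shows "pnum p v K \<in> Qp p"
    "trunc p (pnum p v K) n = (real v / real p ^ K) rmod real p powi n"
proof -
  have pK: "real v / real p ^ K = of_int (int v) * real p powi (- int K)"
    by (simp add: power_int_minus divide_inverse)
  have h1: "\<forall>n\<ge>- int K. pnum p v K n = \<lfloor>real v / real p ^ K / real p powi n\<rfloor> mod int p"
  proof (intro allI impI)
    fix n assume n: "- int K \<le> n"
    have "real p ^ K * real p powi n = real p powi (n + int K)"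
      using p1 by (simp add: power_int_add)
    also have "real p powi (n + int K) = real (p ^ nat (n + int K))"
      using n by (simp add: power_int_def)
    finally have "real v / real p ^ K / real p powi n = real v / real (p ^ nat (n + int K))"
      by simp
    then have "\<lfloor>real v / real p ^ K / real p powi n\<rfloor> = int (v div p ^ nat (n + int K))"
      by (simp only: floor_divide_of_nat_eq)
    then show "pnum p v K n = \<lfloor>real v / real p ^ K / real p powi n\<rfloor> mod int p"
      using n by (simp add: pnum_def zdiv_int of_nat_power)
  qed
  have h2: "\<forall>n < - int K. pnum p v K n = 0" by (simp add: pnum_def)
  have h3: "\<forall>n\<le>- int K. real v / real p ^ K rmod real p powi n = 0"
    using pK by (metis pdv_def pdv_mono[OF p1] rmod_pdv_0)
  have h4: "\<forall>n\<ge>- int K. pdv p n (real v / real p ^ K - real v / real p ^ K)" by (simp add: pdv_0)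
  have C: "pnum p v K \<in> Qp p \<and> trunc p (pnum p v K) n = (real v / real p ^ K) rmod real p powi n"
    using CH[OF p1 h1 h2 h3 h4] by blast
  then show "pnum p v K \<in> Qp p" "trunc p (pnum p v K) n = (real v / real p ^ K) rmod real p powi n" by auto
qed

lemma lowbd_lem:
  assumes x: "x \<in> Qp p"
  shows "\<forall>j < - int (lowbd x). x j = 0"
proof -
  obtain k where k: "\<forall>j<k. x j = 0" using Qp_lb[OF x] by blast
  have "\<forall>j < - int (nat (-k)). x j = 0" using k by auto
  then show ?thesis unfolding lowbd_def by (rule LeastI)
qed

lemma pmult_lem:
  assumes p1: "1 < p" and x: "x \<in> Qp p" and y: "y \<in> Qp p"
  shows "pmult p x y \<in> Qp p"
    "trunc p (pmult p x y) n = (trunc p x (n + int (lowbd x) + int (lowbd y)) * trunc p y (n + int (lowbd x) + int (lowbd y))) rmod real p powi n"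
proof -
  define lx where "lx = int (lowbd x)"
  define ly where "ly = int (lowbd y)"
  have kx: "\<forall>j < - lx. x j = 0" using lowbd_lem[OF x] lx_def by simp
  have ky: "\<forall>j < - ly. y j = 0" using lowbd_lem[OF y] ly_def by simp
  have lxy: "0 \<le> lx" "0 \<le> ly" by (auto simp: lx_def ly_def)
  define W where "W = (\<lambda>n. trunc p x (n + lx + ly) * trunc p y (n + lx + ly))"
  define k0 where "k0 = - lx - lx - ly"
  have z: "\<And>n. n \<le> - lx \<Longrightarrow> trunc p x n = 0"
    using kx T_zero by (metis order_less_le_trans)
  have h1: "\<forall>n\<ge>k0. pmult p x y n = \<lfloor>W (n+1) / real p powi n\<rfloor> mod int p"
    by (simp add: pmult_def W_def lx_def ly_def Let_def algebra_simps)
  have h2: "\<forall>n<k0. pmult p x y n = 0"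
  proof (intro allI impI)
    fix n assume "n < k0"
    then have "trunc p x (n + 1 + int (lowbd x) + int (lowbd y)) = 0"
      using z unfolding k0_def lx_def ly_def by simp
    then show "pmult p x y n = 0" by (simp add: pmult_def Let_def)
  qed
  have h3: "\<forall>n\<le>k0. W n rmod real p powi n = 0" using z lxy unfolding W_def k0_def by simp
  have h4: "\<forall>n\<ge>k0. pdv p n (W (n + 1) - W n)"
  proof (intro allI impI)
    fix n :: int
    define m where "m = n + lx + ly"
    obtain i where i: "trunc p y (m+1) = of_int i * real p powi (- ly)"
      using Tlowdv[OF p1 y ky] unfolding pdv_def by blast
    obtain i' where i': "trunc p x m = of_int i' * real p powi (- lx)"
      using Tlowdv[OF p1 x kx] unfolding pdv_def by blast
    have w1: "W (n+1) = trunc p x (m+1) * trunc p y (m+1)" by (simp add: W_def m_def algebra_simps)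
    have w0: "W n = trunc p x m * trunc p y m" by (simp add: W_def m_def)
    have e: "W (n+1) - W n = of_int (x m) * real p powi m * trunc p y (m+1) + trunc p x m * (of_int (y m) * real p powi m)"
      unfolding w1 w0 T_step[OF kx, of p m] T_step[OF ky, of p m] by (simp add: algebra_simps)
    have a1: "real p powi m * real p powi (- ly) = real p powi (n + lx)"
      using p1 by (simp add: m_def flip: power_int_add)
    have a2: "real p powi (- lx) * real p powi m = real p powi (n + ly)"
      using p1 by (simp add: m_def flip: power_int_add)
    have "W (n+1) - W n = of_int (x m * i) * (real p powi m * real p powi (- ly)) + of_int (i' * y m) * (real p powi (- lx) * real p powi m)"
      unfolding e i i' by (simp add: algebra_simps)
    also have "\<dots> = of_int (x m * i) * real p powi (n + lx) + of_int (i' * y m) * real p powi (n + ly)"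
      unfolding a1 a2 ..
    finally have "W (n+1) - W n = of_int (x m * i) * real p powi (n + lx) + of_int (i' * y m) * real p powi (n + ly)" .
    moreover have "pdv p n (of_int (x m * i) * real p powi (n + lx))"
      using pdv_mono[OF p1 pdv_dig[of p "n+lx" "x m * i"], of n] lxy by simp
    moreover have "pdv p n (of_int (i' * y m) * real p powi (n + ly))"
      using pdv_mono[OF p1 pdv_dig[of p "n+ly" "i' * y m"], of n] lxy by simp
    ultimately show "pdv p n (W (n + 1) - W n)" by (simp add: pdv_add)
  qed
  have C: "pmult p x y \<in> Qp p \<and> trunc p (pmult p x y) n = W n rmod real p powi n"
    using CH[OF p1 h1 h2 h3 h4] by blast
  then show "pmult p x y \<in> Qp p" by auto
  show "trunc p (pmult p x y) n = (trunc p x (n + int (lowbd x) + int (lowbd y)) * trunc p y (n + int (lowbd x) + int (lowbd y))) rmod real p powi n"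
    using C by (simp add: W_def lx_def ly_def)
qed


lemma pzero_Qp: "1 < p \<Longrightarrow> pzero \<in> Qp p"
  by (simp add: Qp_def pzero_def)

lemma T_pzero: "trunc p pzero n = 0"
  by (simp add: T_zero pzero_def)

lemma psub_zero:
  assumes p1: "1 < p" and x: "x \<in> Qp p"
  shows "psub p x pzero = x"
  by (rule Text[OF psub_lem(1)[OF p1 x pzero_Qp[OF p1]] x p1])
     (simp add: psub_lem(2)[OF p1 x pzero_Qp[OF p1]] T_pzero Tbound[OF p1 x])

lemma dig_zero_of_T:
  assumes p1: "1 < p" and z: "z \<in> Qp p" and T: "trunc p z n = 0"
  shows "\<forall>j<n. z j = 0"
proof (intro allI impI)
  fix j assume j: "j < n"
  obtain k where k: "\<forall>j<k. z j = 0" using Qp_lb[OF z] by blast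
  have "trunc p z (j+1) = 0" using Ttrunc[OF p1 z, of "j+1" n] j T by simp
  moreover have "trunc p z j = 0" using Ttrunc[OF p1 z, of "j" n] j T by simp
  ultimately show "z j = 0" using T_step[OF k, of p j] p1 by simp
qed

lemma least_nz:
  assumes p1: "1 < p" and z: "z \<in> Qp p" and nz: "\<not> (\<forall>j. z j = 0)"
  shows "\<exists>g0. z g0 \<noteq> 0 \<and> (\<forall>j<g0. z j = 0) \<and> pnorm p z = real p powi (- g0)"
proof -
  obtain k where k: "\<forall>j<k. z j = 0" using Qp_lb[OF z] by blast
  obtain j0 where j0: "z j0 \<noteq> 0" using nz by blast
  then have "k \<le> j0" using k by force
  define S where "S = {i::nat. z (k + int i) \<noteq> 0}"
  have "nat (j0 - k) \<in> S" using j0 \<open>k \<le> j0\<close> by (simp add: S_def)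
  define i0 where "i0 = (LEAST i. i \<in> S)"
  have i0S: "i0 \<in> S" unfolding i0_def by (rule LeastI) fact
  define g0 where "g0 = k + int i0"
  have g1: "z g0 \<noteq> 0" using i0S by (simp add: S_def g0_def)
  have g2: "\<forall>j<g0. z j = 0"
  proof (intro allI impI)
    fix j assume "j < g0"
    show "z j = 0"
    proof (cases "j < k")
      case True then show ?thesis using k by simp
    next
      case False
      then have "nat (j - k) < i0" using \<open>j < g0\<close> g0_def by simp
      then have "nat (j - k) \<notin> S" unfolding i0_def by (rule not_less_Least)
      then show ?thesis using False by (simp add: S_def)
    qed
  qed
  have "(THE g. z g \<noteq> 0 \<and> (\<forall>j<g. z j = 0)) = g0"
  proof (rule the_equality)
    show "z g0 \<noteq> 0 \<and> (\<forall>j<g0. z j = 0)" using g1 g2 by simp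
    fix g assume "z g \<noteq> 0 \<and> (\<forall>j<g. z j = 0)"
    then show "g = g0" using g1 g2 by (metis linorder_neqE_linordered_idom)
  qed
  moreover have "pnorm p z = real p powi (- (THE g. z g \<noteq> 0 \<and> (\<forall>j<g. z j = 0)))"
    unfolding pnorm_def using nz by (simp only: if_False)
  ultimately have "pnorm p z = real p powi (- g0)" by simp
  then show ?thesis using g1 g2 by blast
qed

lemma pnorm_le:
  assumes p1: "1 < p" and z: "z \<in> Qp p" and d: "\<forall>j < - g. z j = 0"
  shows "pnorm p z \<le> real p powi g"
proof (cases "\<forall>j. z j = 0")
  case True then show ?thesis using p1 by (simp add: pnorm_def)
next
  case False
  then obtain g0 where g0: "z g0 \<noteq> 0" "\<forall>j<g0. z j = 0" "pnorm p z = real p powi (- g0)"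
    using least_nz[OF p1 z] by blast
  have "- g0 \<le> g" using g0(1) d by force
  then show ?thesis using g0(3) p1 by (simp add: power_int_increasing)
qed

lemma pnorm_ge:
  assumes p1: "1 < p" and z: "z \<in> Qp p" and n: "pnorm p z \<le> real p powi g"
  shows "\<forall>j < - g. z j = 0"
proof (cases "\<forall>j. z j = 0")
  case True then show ?thesis by simp
next
  case False
  then obtain g0 where g0: "z g0 \<noteq> 0" "\<forall>j<g0. z j = 0" "pnorm p z = real p powi (- g0)"
    using least_nz[OF p1 z] by blast
  have "- g0 \<le> g"
  proof (rule ccontr)
    assume "\<not> - g0 \<le> g"
    then have "real p powi g < real p powi (- g0)" using p1 by (intro power_int_strict_increasing) auto
    then show False using n g0(3) by simp
  qed
  then show ?thesis using g0(2) by auto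
qed

lemma pball_suff:
  assumes p1: "1 < p" and x: "x \<in> Qp p" and y: "y \<in> Qp p"
    and e: "trunc p x (- g) = trunc p y (- g)"
  shows "x \<in> pball p g y"
proof -
  have "trunc p (psub p x y) (- g) = 0" using psub_lem(2)[OF p1 x y] e by simp
  then have "\<forall>j < - g. psub p x y j = 0" using dig_zero_of_T[OF p1 psub_lem(1)[OF p1 x y]] by blast
  then show ?thesis unfolding pball_def using x pnorm_le[OF p1 psub_lem(1)[OF p1 x y]] by blast
qed

lemma supp_dig:
  assumes p1: "1 < p" and f: "f \<in> DNM p N M" and x: "x \<in> Qp p" and nz: "f x \<noteq> 0"
  shows "\<forall>j < - int N. x j = 0"
proof -
  have "x \<in> pball p (int N) pzero" using f x nz by (simp add: DNM_def)
  then have "pnorm p x \<le> real p powi (int N)" by (simp add: pball_def psub_zero[OF p1 x])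
  then show ?thesis using pnorm_ge[OF p1 x] by blast
qed

lemma rmod_add1: "(a rmod z + b) rmod z = (a + b) rmod z"
  by (metis rmod_add rmod_rmod)
lemma rmod_add2: "(a + b rmod z) rmod z = (a + b) rmod z"
  by (metis rmod_add rmod_rmod)

lemma padd_pnum:
  assumes p1: "1 < p" and x: "x \<in> Qp p"
  shows "trunc p (padd p x (pnum p v 0)) n = (trunc p x n + real v) rmod real p powi n"
  using padd_lem(2)[OF p1 x pnum_lem(1)[OF p1]] pnum_lem(2)[OF p1] by (simp add: rmod_add2)

lemma iter_per:
  assumes p1: "1 < p" and f: "f \<in> DNM p N M"
  shows "x \<in> Qp p \<Longrightarrow> f (padd p x (pnum p (k * p ^ M) 0)) = f x"
proof (induction k)
  case 0
  have "padd p x (pnum p 0 0) = x"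
    by (rule Text[OF padd_lem(1)[OF p1 0 pnum_lem(1)[OF p1]] 0 p1])
       (simp add: padd_pnum[OF p1 0] Tbound[OF p1 0])
  then show ?case by simp
next
  case (Suc k)
  have q: "padd p x (pnum p (k * p ^ M) 0) \<in> Qp p" using padd_lem(1)[OF p1 Suc(2) pnum_lem(1)[OF p1]] .
  have "padd p x (pnum p (Suc k * p ^ M) 0) = padd p (padd p x (pnum p (k * p ^ M) 0)) (pnum p (p ^ M) 0)"
    by (rule Text[OF padd_lem(1)[OF p1 Suc(2) pnum_lem(1)[OF p1]] padd_lem(1)[OF p1 q pnum_lem(1)[OF p1]] p1])
       (simp add: padd_pnum[OF p1 Suc(2)] padd_pnum[OF p1 q] rmod_add1 rmod_add2 algebra_simps)
  moreover have "f (padd p (padd p x (pnum p (k * p ^ M) 0)) (pnum p (p ^ M) 0)) = f (padd p x (pnum p (k * p ^ M) 0))" using f q by (simp add: DNM_def)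
  ultimately show ?case using Suc by simp
qed

lemma CL:
  assumes p1: "1 < p" and f: "f \<in> DNM p N M" and x: "x \<in> Qp p" and y: "y \<in> Qp p"
    and e: "trunc p x (int M) = trunc p y (int M)"
  shows "f x = f y"
proof -
  have "locally_constant p f" using f by (simp add: DNM_def test_function_def)
  then obtain g where g: "\<forall>z\<in>pball p g y. f z = f y" using y unfolding locally_constant_def by blast
  define n where "n = max (int M) (- g)"
  have nM: "int M \<le> n" "- g \<le> n" by (auto simp: n_def)
  obtain i1 where i1: "trunc p x n - trunc p x (int M) = of_int i1 * real p powi int M"
    using Tdiv[OF p1 x nM(1)] unfolding pdv_def by blast
  obtain i2 where i2: "trunc p y n - trunc p y (int M) = of_int i2 * real p powi int M"
    using Tdiv[OF p1 y nM(1)] unfolding pdv_def by blast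
  define j where "j = i2 - i1"
  have ej: "trunc p y n - trunc p x n = of_int j * real p ^ M" using i1 i2 e by (simp add: j_def algebra_simps)
  define q where "q = int p ^ nat (n - int M)"
  have q0: "0 < q" using p1 by (simp add: q_def)
  define k where "k = nat (j mod q)"
  have "int k = j mod q" using q0 by (simp add: k_def)
  then have kj: "int k = j - q * (j div q)" by (metis minus_mult_div_eq_mod)
  have pq: "real p ^ M * of_int q = real p powi n"
    using nM p1 by (simp add: q_def power_int_def flip: power_add)
  define z where "z = padd p x (pnum p (k * p ^ M) 0)"
  have zQ: "z \<in> Qp p" unfolding z_def using padd_lem(1)[OF p1 x pnum_lem(1)[OF p1]] .
  have "trunc p z n = (trunc p x n + real (k * p ^ M)) rmod real p powi n"
    unfolding z_def by (rule padd_pnum[OF p1 x])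
  also have "\<dots> = trunc p y n"
  proof (rule rmod_eqI[OF p1])
    show "0 \<le> trunc p y n" "trunc p y n < real p powi n" using Tbound[OF p1 y] by auto
    have "trunc p x n + real (k * p ^ M) - trunc p y n = of_int k * real p ^ M - of_int j * real p ^ M"
      using ej by simp
    also have "\<dots> = of_int (- (j div q)) * (real p ^ M * of_int q)" unfolding kj by (simp add: algebra_simps)
    finally show "pdv p n (trunc p x n + real (k * p ^ M) - trunc p y n)" unfolding pdv_def pq by blast
  qed
  finally have "trunc p z n = trunc p y n" .
  then have "trunc p z (- g) = trunc p y (- g)"
    using Ttrunc[OF p1 zQ nM(2)] Ttrunc[OF p1 y nM(2)] by simp
  then have "z \<in> pball p g y" by (rule pball_suff[OF p1 zQ y])
  then have "f z = f y" using g by blast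
  moreover have "f z = f x" unfolding z_def by (rule iter_per[OF p1 f x])
  ultimately show ?thesis by simp
qed

definition Psi :: "nat \<Rightarrow> nat \<Rightarrow> nat \<Rightarrow> (padic \<Rightarrow> complex) \<Rightarrow> real \<Rightarrow> complex" where
  "Psi p N M f r = (if (\<exists>i::int. r = of_int i * real p powi (- int N))
      then f (pnum p (nat (\<lfloor>r * real p ^ N\<rfloor> mod int (p ^ (M + N)))) N) else 0)"

lemma PHI:
  assumes p1: "1 < p" and f: "f \<in> DNM p N M" and z: "z \<in> Qp p"
  shows "f z = Psi p N M f (trunc p z (int M))"
proof (cases "\<exists>i::int. trunc p z (int M) = of_int i * real p powi (- int N)")
  case False
  have "f z = 0"
  proof (rule ccontr)
    assume "f z \<noteq> 0"
    then have "\<forall>j < - int N. z j = 0" using supp_dig[OF p1 f z] by blast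
    then have "pdv p (- int N) (trunc p z (int M))" using Tlowdv[OF p1 z] by blast
    then show False using False unfolding pdv_def by blast
  qed
  then show ?thesis using False by (simp add: Psi_def)
next
  case True
  then obtain i where i: "trunc p z (int M) = of_int i * real p powi (- int N)" by blast
  have pN: "real p powi (- int N) * real p ^ N = 1" using p1 by (simp add: power_int_minus)
  have fl: "\<lfloor>trunc p z (int M) * real p ^ N\<rfloor> = i" unfolding i using pN by (simp add: mult.assoc)
  have b: "0 \<le> trunc p z (int M)" "trunc p z (int M) < real p ^ M" using Tbound[OF p1 z, of "int M"] by auto
  have "0 < real p powi (- int N)" using p1 by simp
  then have i0: "0 \<le> i" using b(1) i by (simp add: zero_le_mult_iff)
  have "trunc p z (int M) * real p ^ N < real p ^ M * real p ^ N" using b p1 by simp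
  then have "of_int i < real p ^ (M + N)" using i pN by (simp add: power_add mult.assoc)
  then have i1: "i < int (p ^ (M+N))" by (metis of_int_less_iff of_int_of_nat_eq of_nat_power)
  have im: "i mod (int p ^ (M + N)) = i" using i0 i1 by simp
  have w: "trunc p (pnum p (nat i) N) (int M) = trunc p z (int M)"
  proof -
    have "real (nat i) / real p ^ N = trunc p z (int M)"
      using i i0 p1 by (simp add: power_int_minus divide_inverse)
    then show ?thesis using pnum_lem(2)[OF p1, of "nat i" N "int M"] b by simp
  qed
  have "f z = f (pnum p (nat i) N)" using CL[OF p1 f z pnum_lem(1)[OF p1] w[symmetric]] .
  then show ?thesis using True by (simp add: Psi_def fl im)
qed

lemma Psi_per:
  assumes p1: "1 < p"
  shows "Psi p N M f (r + of_int c * real p ^ M) = Psi p N M f r"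
proof -
  have pp: "real p ^ M = of_int (c0) * real p powi (- int N)" if "c0 = int (p ^ (M+N))" for c0
    using that p1 by (simp add: power_int_minus power_add)
  have e1: "(\<exists>i::int. r + of_int c * real p ^ M = of_int i * real p powi (- int N)) \<longleftrightarrow>
            (\<exists>i::int. r = of_int i * real p powi (- int N))"
  proof
    assume "\<exists>i::int. r + of_int c * real p ^ M = of_int i * real p powi (- int N)"
    then obtain i where "r + of_int c * real p ^ M = of_int i * real p powi (- int N)" by blast
    then have "r = of_int (i - c * int (p^(M+N))) * real p powi (- int N)"
      using pp[OF refl] by (simp add: algebra_simps)
    then show "\<exists>i::int. r = of_int i * real p powi (- int N)" by blast
  next
    assume "\<exists>i::int. r = of_int i * real p powi (- int N)"
    then obtain i where "r = of_int i * real p powi (- int N)" by blast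
    then have "r + of_int c * real p ^ M = of_int (i + c * int (p^(M+N))) * real p powi (- int N)"
      using pp[OF refl] by (simp add: algebra_simps)
    then show "\<exists>i::int. r + of_int c * real p ^ M = of_int i * real p powi (- int N)" by blast
  qed
  have "(r + of_int c * real p ^ M) * real p ^ N = r * real p ^ N + of_int (c * int (p^(M+N)))"
    by (simp add: algebra_simps power_add)
  then have e2: "\<lfloor>(r + of_int c * real p ^ M) * real p ^ N\<rfloor> = \<lfloor>r * real p ^ N\<rfloor> + c * int (p^(M+N))"
    by (metis floor_add_int)
  show ?thesis unfolding Psi_def e1 e2 by simp
qed


definition ee :: "nat \<Rightarrow> int \<Rightarrow> complex" where
  "ee n x = cis (2 * pi * of_int x / real n)"

lemma ee_add: "ee n (a + b) = ee n a * ee n b"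
  unfolding ee_def by (simp add: cis_mult add_divide_distrib algebra_simps)

lemma ee_0: "ee n 0 = 1"
  by (simp add: ee_def)

lemma ee_per: assumes "0 < n" shows "ee n (a + int n * c) = ee n a"
proof -
  have "2 * pi * of_int (int n * c) / real n = 2 * pi * of_int c" using assms by simp
  then have "ee n (int n * c) = cis (2 * pi * of_int c)" unfolding ee_def by metis
  also have "\<dots> = 1" by (rule cis_multiple_2pi) simp
  finally show ?thesis by (simp add: ee_add)
qed

lemma ee_pow: "ee n a ^ j = ee n (a * int j)"
  unfolding ee_def DeMoivre by (simp add: algebra_simps)

lemma geo:
  assumes n: "0 < n"
  shows "(\<Sum>l<n. ee n (int l * d)) = (if int n dvd d then of_nat n else 0)"
proof (cases "int n dvd d")
  case True
  then obtain c where c: "d = int n * c" by blast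
  have "\<And>l. ee n (int l * d) = 1" using ee_per[OF n, of 0] ee_0 unfolding c
    by (metis add_0 mult.left_commute)
  then show ?thesis using True by simp
next
  case False
  define z where "z = ee n d"
  have z1: "z \<noteq> 1"
  proof
    assume "z = 1"
    then obtain k where "2 * pi * of_int d / real n = of_int k * (2 * pi)"
      unfolding z_def ee_def cis_eq_1_iff by blast
    then have "of_int d = real n * of_int k" using n by (simp add: field_simps)
    then have "d = int n * k" by (metis of_int_eq_iff of_int_mult of_int_of_nat_eq)
    then show False using False by simp
  qed
  have zn: "z ^ n = 1" unfolding z_def ee_pow using ee_per[OF n, of 0 d] ee_0 by (simp add: mult.commute)
  have "(\<Sum>l<n. ee n (int l * d)) = (\<Sum>l<n. z ^ l)" unfolding z_def ee_pow by (simp add: mult.commute)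
  also have "\<dots> = 0" using z1 zn by (simp add: sum_gp_strict)
  finally show ?thesis using False by simp
qed

definition Fh :: "nat \<Rightarrow> (int \<Rightarrow> complex) \<Rightarrow> nat \<Rightarrow> complex" where
  "Fh n F l = (\<Sum>k<n. ee n (int l * int k) * F (int k))"

lemma inversion:
  assumes n: "0 < n" and per: "\<forall>v. F v = F (v mod int n)"
  shows "F x = (\<Sum>l<n. Fh n F l * ee n (- int l * x)) / of_nat n"
proof -
  have "(\<Sum>l<n. Fh n F l * ee n (- int l * x)) = (\<Sum>l<n. \<Sum>k<n. F (int k) * ee n (int l * (int k - x)))"
    unfolding Fh_def sum_distrib_right
    by (intro sum.cong refl) (simp add: ee_add[symmetric] algebra_simps)
  also have "\<dots> = (\<Sum>k<n. F (int k) * (\<Sum>l<n. ee n (int l * (int k - x))))"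
    by (subst sum.swap) (simp add: sum_distrib_left)
  also have "\<dots> = (\<Sum>k<n. if k = nat (x mod int n) then F (int k) * of_nat n else 0)"
  proof (intro sum.cong refl)
    fix k assume k: "k \<in> {..<n}"
    have "int n dvd (int k - x) \<longleftrightarrow> k = nat (x mod int n)"
    proof
      assume "int n dvd (int k - x)"
      then have "int k mod int n = x mod int n" by (simp add: mod_eq_dvd_iff)
      then show "k = nat (x mod int n)" using k by simp
    next
      assume "k = nat (x mod int n)"
      then have "int k mod int n = x mod int n" using n by simp
      then show "int n dvd (int k - x)" by (simp add: mod_eq_dvd_iff)
    qed
    then show "F (int k) * (\<Sum>l<n. ee n (int l * (int k - x))) = (if k = nat (x mod int n) then F (int k) * of_nat n else 0)"
      using geo[OF n, of "int k - x"] by simp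
  qed
  also have "\<dots> = F (x mod int n) * of_nat n"
  proof -
    have "nat (x mod int n) \<in> {..<n}" using n by (simp add: nat_less_iff)
    then show ?thesis using n by (simp add: sum.delta)
  qed
  finally show ?thesis using per n by simp
qed

lemma lagrange:
  fixes w t :: "nat \<Rightarrow> complex"
  assumes fin: "finite S" and inj: "inj_on w S" and card: "card S \<le> m"
  shows "\<exists>\<gamma>. \<forall>s\<in>S. (\<Sum>j<m. \<gamma> j * w s ^ j) = t s"
proof (cases "S = {}")
  case True then show ?thesis by simp
next
  case False
  define Q where "Q = (\<Sum>s\<in>S. smult (t s / (\<Prod>u\<in>S-{s}. (w s - w u))) (\<Prod>u\<in>S-{s}. [:- w u, 1:]))"
  have dQ: "degree Q < m"
  proof -
    have "degree Q \<le> card S - 1" unfolding Q_def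
    proof (rule degree_sum_le[OF fin])
      fix s assume s: "s \<in> S"
      have "degree (\<Prod>u\<in>S-{s}. [:- w u, 1:]) \<le> sum (degree \<circ> (\<lambda>u. [:- w u, 1:])) (S - {s})"
        by (rule degree_prod_sum_le) (use fin in simp)
      also have "\<dots> = card S - 1" using s fin by simp
      finally show "degree (smult (t s / (\<Prod>u\<in>S-{s}. (w s - w u))) (\<Prod>u\<in>S-{s}. [:- w u, 1:])) \<le> card S - 1"
        using degree_smult_le order_trans by blast
    qed
    moreover have "0 < card S" using False fin by (simp add: card_gt_0_iff)
    ultimately show ?thesis using card by simp
  qed
  have pQ: "poly Q x = (\<Sum>j<m. coeff Q j * x ^ j)" for x
  proof -
    have "poly Q x = (\<Sum>j\<le>degree Q. coeff Q j * x ^ j)" by (rule poly_altdef)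
    also have "\<dots> = (\<Sum>j<m. coeff Q j * x ^ j)"
      by (rule sum.mono_neutral_left) (use dQ coeff_eq_0 le_degree in auto)
    finally show ?thesis .
  qed
  have "\<forall>s0\<in>S. poly Q (w s0) = t s0"
  proof
    fix s0 assume s0: "s0 \<in> S"
    have "poly Q (w s0) = (\<Sum>s\<in>S. t s / (\<Prod>u\<in>S-{s}. (w s - w u)) * (\<Prod>u\<in>S-{s}. (w s0 - w u)))"
      unfolding Q_def poly_sum poly_smult poly_prod by simp
    also have "\<dots> = (\<Sum>s\<in>S. if s = s0 then t s0 else 0)"
    proof (intro sum.cong refl)
      fix s assume s: "s \<in> S"
      show "t s / (\<Prod>u\<in>S-{s}. (w s - w u)) * (\<Prod>u\<in>S-{s}. (w s0 - w u)) = (if s = s0 then t s0 else 0)"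
      proof (cases "s = s0")
        case True
        have "(\<Prod>u\<in>S-{s}. (w s - w u)) \<noteq> 0"
          using inj s fin by (auto simp: inj_on_def)
        then show ?thesis using True by simp
      next
        case False
        have "(\<Prod>u\<in>S-{s}. (w s0 - w u)) = 0"
          using s0 False fin by (intro prod_zero) auto
        then show ?thesis using False by simp
      qed
    qed
    also have "\<dots> = t s0" using s0 fin by simp
    finally show "poly Q (w s0) = t s0" .
  qed
  then show ?thesis using pQ by (intro exI[of _ "coeff Q"]) auto
qed

lemma LA:
  assumes n: "0 < n" and per: "\<forall>v. F v = F (v mod int n)"
    and card: "card {l \<in> {0..<n}. Fh n F l \<noteq> 0} \<le> m"
  shows "\<exists>\<gamma>::nat\<Rightarrow>complex. \<forall>s. F (s - c) = (\<Sum>j<m. \<gamma> j * F (s - int j + r))"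
proof -
  define S where "S = {l \<in> {0..<n}. Fh n F l \<noteq> 0}"
  have inj: "inj_on (\<lambda>l. ee n (int l)) S"
  proof (rule inj_onI)
    fix a b assume a: "a \<in> S" and b: "b \<in> S" and e: "ee n (int a) = ee n (int b)"
    have "ee n (int a) = ee n (int a - int b) * ee n (int b)" by (simp flip: ee_add)
    moreover have "ee n (int b) \<noteq> 0" by (simp add: ee_def)
    ultimately have e1: "ee n (int a - int b) = 1" using e by simp
    have "(\<Sum>l<n. ee n (int l * (int a - int b))) = (\<Sum>l<n. ee n (int a - int b)^l)"
      by (simp add: ee_pow mult.commute)
    also have "\<dots> = of_nat n" using e1 by simp
    finally have "(\<Sum>l<n. ee n (int l * (int a - int b))) = of_nat n" .
    then have "int n dvd (int a - int b)" using geo[OF n, of "int a - int b"] n by (auto split: if_splits)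
    then have "int a mod int n = int b mod int n" by (simp add: mod_eq_dvd_iff)
    moreover have "a < n" "b < n" using a b by (auto simp: S_def)
    ultimately show "a = b" by simp
  qed
  obtain \<gamma> where g: "\<forall>l\<in>S. (\<Sum>j<m. \<gamma> j * ee n (int l) ^ j) = ee n (int l * (c + r))"
    using lagrange[OF _ inj, of m "\<lambda>l. ee n (int l * (c + r))"] card by (auto simp: S_def)
  show ?thesis
  proof (intro exI allI)
    fix s
    have "F (s - c) = (\<Sum>l<n. Fh n F l * ee n (- int l * (s - c))) / of_nat n"
      by (rule inversion[OF n per])
    also have "\<dots> = (\<Sum>l<n. \<Sum>j<m. \<gamma> j * (Fh n F l * ee n (- int l * (s - int j + r)))) / of_nat n"
    proof (intro arg_cong2[where f="(/)"] sum.cong refl)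
      fix l assume l: "l \<in> {..<n}"
      show "Fh n F l * ee n (- int l * (s - c)) = (\<Sum>j<m. \<gamma> j * (Fh n F l * ee n (- int l * (s - int j + r))))"
      proof (cases "Fh n F l = 0")
        case True then show ?thesis by simp
      next
        case False
        then have lS: "l \<in> S" using l by (simp add: S_def)
        have "(\<Sum>j<m. \<gamma> j * (Fh n F l * ee n (- int l * (s - int j + r))))
            = Fh n F l * ee n (- int l * (s + r)) * (\<Sum>j<m. \<gamma> j * ee n (int l) ^ j)"
          unfolding sum_distrib_left ee_pow
        proof (intro sum.cong refl)
          fix j assume "j \<in> {..<m}"
          have "- int l * (s - int j + r) = - int l * (s + r) + int l * int j" by (simp add: algebra_simps)
          then have "ee n (- int l * (s - int j + r)) = ee n (- int l * (s + r)) * ee n (int l * int j)"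
            by (simp only: ee_add)
          then show "\<gamma> j * (Fh n F l * ee n (- int l * (s - int j + r))) = Fh n F l * ee n (- int l * (s + r)) * (\<gamma> j * ee n (int l * int j))"
            by simp
        qed
        also have "\<dots> = Fh n F l * (ee n (- int l * (s + r)) * ee n (int l * (c + r)))"
          using g lS by simp
        also have "ee n (- int l * (s + r)) * ee n (int l * (c + r)) = ee n (- int l * (s - c))"
        proof -
          have "- int l * (s - c) = - int l * (s + r) + int l * (c + r)" by (simp add: algebra_simps)
          then show ?thesis by (simp only: ee_add)
        qed
        finally show ?thesis by simp
      qed
    qed
    also have "\<dots> = (\<Sum>j<m. \<gamma> j * ((\<Sum>l<n. Fh n F l * ee n (- int l * (s - int j + r))) / of_nat n))"
      by (subst sum.swap) (simp add: sum_distrib_left sum_divide_distrib)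
    also have "\<dots> = (\<Sum>j<m. \<gamma> j * F (s - int j + r))"
      by (simp only: inversion[OF n per, symmetric])
    finally show "F (s - c) = (\<Sum>j<m. \<gamma> j * F (s - int j + r))" .
  qed
qed


lemma per_sum:
  fixes h :: "nat \<Rightarrow> complex"
  assumes per: "\<forall>v. h (v + n) = h v"
  shows "(\<Sum>v<q * n. h v) = of_nat q * (\<Sum>v<n. h v)"
proof -
  have hm: "h (u + m * n) = h u" for u m
    by (induction m arbitrary: u) (simp_all add: per add.assoc[symmetric])
  have inner: "sum h {m * n..<m * n + n} = (\<Sum>v<n. h v)" for m
  proof -
    have "sum h {m * n..<m * n + n} = sum h {0 + m * n..<n + m * n}" by (simp add: add.commute)
    also have "\<dots> = (\<Sum>v=0..<n. h (v + m * n))" by (rule sum.shift_bounds_nat_ivl)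
    also have "\<dots> = (\<Sum>v<n. h v)" by (simp add: hm atLeast0LessThan)
    finally show ?thesis .
  qed
  have "(\<Sum>v<q * n. h v) = (\<Sum>m<q. sum h {m * n..<m * n + n})"
    by (simp add: sum.nat_group)
  also have "\<dots> = (\<Sum>m<q. \<Sum>v<n. h v)" by (simp add: inner)
  finally show ?thesis by simp
qed

lemma T_above:
  assumes "\<forall>j\<ge>K. c j = 0" "K \<le> n"
  shows "trunc p c n = trunc p c K"
proof -
  have "{j. j < n \<and> c j \<noteq> 0} = {j. j < K \<and> c j \<noteq> 0}"
  proof (rule Collect_cong)
    fix j
    show "(j < n \<and> c j \<noteq> 0) = (j < K \<and> c j \<noteq> 0)"
    proof (cases "j < K")
      case True then show ?thesis using assms(2) by auto
    next
      case False then show ?thesis using assms(1) by auto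
    qed
  qed
  then show ?thesis by (simp add: trunc_def)
qed

lemma reps_char:
  assumes p1: "1 < p" and NK: "N' \<le> K"
  shows "{c \<in> reps p K. \<forall>j < - int N'. c j = 0} = (\<lambda>v. pnum p v N') ` {..<p^(K+N')}"
proof
  show "(\<lambda>v. pnum p v N') ` {..<p^(K+N')} \<subseteq> {c \<in> reps p K. \<forall>j < - int N'. c j = 0}"
  proof
    fix x assume "x \<in> (\<lambda>v. pnum p v N') ` {..<p^(K+N')}"
    then obtain v where v: "v < p ^ (K + N')" and xv: "x = pnum p v N'" by blast
    have r: "pnum p v N' \<in> reps p K" unfolding reps_def
    proof (intro CollectI conjI allI impI)
      show "pnum p v N' \<in> Qp p" by (rule pnum_lem(1)[OF p1])
      fix j assume "j < - int K \<or> int K \<le> j"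
      then show "pnum p v N' j = 0"
      proof
        assume "j < - int K" then show ?thesis using NK by (simp add: pnum_def)
      next
        assume j: "int K \<le> j"
        have "p ^ (K + N') \<le> p ^ nat (j + int N')" using j p1 by (intro power_increasing) auto
        then have "v < p ^ nat (j + int N')" using v by (rule order_less_le_trans[rotated])
        then have "int v < int (p ^ nat (j + int N'))" by (simp only: of_nat_less_iff)
        then have "int v < int p ^ nat (j + int N')" by simp
        then show ?thesis using j by (simp add: pnum_def)
      qed
    qed
    have "\<forall>j < - int N'. pnum p v N' j = 0" by (simp add: pnum_def)
    then show "x \<in> {c \<in> reps p K. \<forall>j < - int N'. c j = 0}" using r xv by blast
  qed
next
  show "{c \<in> reps p K. \<forall>j < - int N'. c j = 0} \<subseteq> (\<lambda>v. pnum p v N') ` {..<p^(K+N')}"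
  proof safe
    fix c assume c: "c \<in> reps p K" and low: "\<forall>j < - int N'. c j = 0"
    have cQ: "c \<in> Qp p" using c by (simp add: reps_def)
    have hi: "\<forall>j\<ge>int K. c j = 0" using c by (simp add: reps_def)
    obtain i where i: "trunc p c (int K) = of_int i * real p powi (- int N')"
      using Tlowdv[OF p1 cQ low] unfolding pdv_def by blast
    have pN: "real p powi (- int N') * real p ^ N' = 1" using p1 by (simp add: power_int_minus)
    have b: "0 \<le> trunc p c (int K)" "trunc p c (int K) < real p ^ K" using Tbound[OF p1 cQ, of "int K"] by auto
    have pp: "0 < real p powi (- int N')" using p1 by simp
    then have i0: "0 \<le> i" using b(1) i by (simp add: zero_le_mult_iff)
    have "trunc p c (int K) * real p ^ N' < real p ^ K * real p ^ N'" using b p1 by simp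
    then have "of_int i < real p ^ (K + N')" using i pN by (simp add: power_add mult.assoc)
    then have "of_int i < (of_int (int (p ^ (K + N'))) :: real)" by simp
    then have ii: "i < int (p ^ (K + N'))" by (simp only: of_int_less_iff)
    have "int (nat i) = i" using i0 by simp
    with ii have "int (nat i) < int (p ^ (K + N'))" by (simp only:)
    then have i1: "nat i < p ^ (K+N')" by (simp only: of_nat_less_iff)
    have vK: "real (nat i) / real p ^ N' = trunc p c (int K)"
      using i i0 p1 by (simp add: power_int_minus divide_inverse)
    have "c = pnum p (nat i) N'"
    proof (rule Text[OF cQ pnum_lem(1)[OF p1] p1], rule allI)
      fix n
      show "trunc p c n = trunc p (pnum p (nat i) N') n"
      proof (cases "n \<le> int K")
        case True
        then show ?thesis using Ttrunc[OF p1 cQ True] pnum_lem(2)[OF p1] vK by simp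
      next
        case False
        then have "trunc p c n = trunc p c (int K)" using T_above[OF hi, of n] by simp
        moreover have "real p ^ K \<le> real p powi n" using False p1
          using power_int_increasing[of "int K" n "real p"] by simp
        ultimately show ?thesis using pnum_lem(2)[OF p1] vK b by simp
      qed
    qed
    then show "c \<in> (\<lambda>v. pnum p v N') ` {..<p ^ (K + N')}" using i1 by blast
  qed
qed

lemma pnum_inj:
  assumes p1: "1 < p"
  shows "inj_on (\<lambda>v. pnum p v N') {..<p^(K+N')}"
proof (rule inj_onI)
  fix a b assume a: "a \<in> {..<p^(K+N')}" and b: "b \<in> {..<p^(K+N')}" and e: "pnum p a N' = pnum p b N'"
  have r: "real v / real p ^ N' rmod real p powi int K = real v / real p ^ N'" if v: "v < p^(K+N')" for v
  proof (rule rmod_idem)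
    have "v < p ^ K * p ^ N'" using v by (simp add: power_add)
    then have "real v < real (p ^ K * p ^ N')" by (simp only: of_nat_less_iff)
    then have "real v < real p ^ K * real p ^ N'" by simp
    then show "real v / real p ^ N' \<in> {0..<\<bar>real p powi int K\<bar>}" using p1 by (simp add: field_simps)
  qed
  have "trunc p (pnum p a N') (int K) = trunc p (pnum p b N') (int K)" using e by simp
  then have "real a / real p ^ N' = real b / real p ^ N'" using r a b pnum_lem(2)[OF p1] by simp
  then show "a = b" using p1 by simp
qed

definition FF :: "nat \<Rightarrow> nat \<Rightarrow> nat \<Rightarrow> (padic \<Rightarrow> complex) \<Rightarrow> int \<Rightarrow> complex" where
  "FF p N M f v = f (pnum p (nat (v mod int (p ^ (M + N)))) N)"

lemma Psi_int:
  assumes p1: "1 < p"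
  shows "Psi p N M f (of_int i * real p powi (- int N)) = FF p N M f i"
proof -
  have pN: "real p powi (- int N) * real p ^ N = 1" using p1 by (simp add: power_int_minus)
  have "\<lfloor>of_int i * real p powi (- int N) * real p ^ N\<rfloor> = i" using pN by (simp add: mult.assoc)
  then show ?thesis unfolding Psi_def FF_def by auto
qed

lemma phi_pnum:
  assumes p1: "1 < p" and f: "f \<in> DNM p N M"
  shows "f (pnum p v N) = FF p N M f (int v)"
proof -
  have "f (pnum p v N) = Psi p N M f (real v / real p ^ N rmod real p powi int M)"
    using PHI[OF p1 f pnum_lem(1)[OF p1]] pnum_lem(2)[OF p1] by simp
  also have "real v / real p ^ N rmod real p powi int M
      = real v / real p ^ N + of_int (- \<lfloor>real v / real p ^ N / real p ^ M\<rfloor>) * real p ^ M"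
    using p1 by (simp add: rmod_def)
  also have "Psi p N M f \<dots> = Psi p N M f (real v / real p ^ N)" by (rule Psi_per[OF p1])
  also have "real v / real p ^ N = of_int (int v) * real p powi (- int N)"
    by (simp add: power_int_minus divide_inverse)
  also have "Psi p N M f \<dots> = FF p N M f (int v)" by (rule Psi_int[OF p1])
  finally show ?thesis .
qed

lemma val_pdv:
  assumes p1: "1 < p"
  shows "pdv p (- int (lowbd (pnum p v K))) (real v / real p ^ K)"
proof -
  have "v < 2 ^ v" by (rule less_exp)
  also have "(2::nat) ^ v \<le> p ^ v" using p1 by (intro power_mono) auto
  finally have "real v < real p ^ v" by (metis of_nat_less_iff of_nat_power)
  moreover have "real v / real p ^ K \<le> real v"
  proof -
    have pk: "1 \<le> real p ^ K" using p1 by simp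
    have "real v * 1 \<le> real v * real p ^ K" by (rule mult_left_mono[OF pk]) simp
    then show ?thesis using pk by (simp add: divide_le_eq)
  qed
  ultimately have "real v / real p ^ K < real p ^ v" by linarith
  then have r: "real v / real p ^ K < real p powi int v" by simp
  have "trunc p (pnum p v K) (int v) = real v / real p ^ K"
    using pnum_lem(2)[OF p1, of v K "int v"] r by simp
  then show ?thesis using Tlowdv[OF p1 pnum_lem(1)[OF p1] lowbd_lem[OF pnum_lem(1)[OF p1]]] by metis
qed


lemma cis_frac: "cis (2 * pi * (x rmod 1)) = cis (2 * pi * x)"
proof -
  have r: "x rmod 1 = x - of_int \<lfloor>x\<rfloor>" by (simp add: rmod_def)
  have "cis (2 * pi * x) = cis (2 * pi * (x - of_int \<lfloor>x\<rfloor>) + 2 * pi * of_int \<lfloor>x\<rfloor>)"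
    by (simp add: algebra_simps)
  also have "\<dots> = cis (2 * pi * (x - of_int \<lfloor>x\<rfloor>)) * cis (2 * pi * of_int \<lfloor>x\<rfloor>)"
    by (simp only: cis_mult)
  also have "cis (2 * pi * of_int \<lfloor>x\<rfloor>) = 1" by (rule cis_multiple_2pi) simp
  finally show ?thesis using r by simp
qed

lemma pchi_pm:
  assumes p1: "1 < p"
  shows "pchi p (pmult p (pnum p l M) (pnum p v N)) = ee (p ^ (M + N)) (int l * int v)"
proof -
  define x where "x = pnum p l M"
  define y where "y = pnum p v N"
  define lx where "lx = lowbd x"
  define ly where "ly = lowbd y"
  define L where "L = int lx + int ly"
  define A where "A = real l / real p ^ M"
  define B where "B = real v / real p ^ N"
  define P where "P = real p powi L"
  have P0: "0 < P" using p1 by (simp add: P_def)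
  have xQ: "x \<in> Qp p" and yQ: "y \<in> Qp p" unfolding x_def y_def using pnum_lem(1)[OF p1] by auto
  obtain iA where iA: "A = of_int iA * real p powi (- int lx)"
    using val_pdv[OF p1, of l M] unfolding pdv_def A_def lx_def x_def by blast
  obtain iB where iB: "B = of_int iB * real p powi (- int ly)"
    using val_pdv[OF p1, of v N] unfolding pdv_def B_def ly_def y_def by blast
  have Tx: "trunc p x L = A + of_int (- \<lfloor>A / P\<rfloor>) * P"
    using pnum_lem(2)[OF p1, of l M L] P0 unfolding x_def A_def P_def by (simp add: rmod_def)
  have Ty: "trunc p y L = B + of_int (- \<lfloor>B / P\<rfloor>) * P"
    using pnum_lem(2)[OF p1, of v N L] P0 unfolding y_def B_def P_def by (simp add: rmod_def)
  define a where "a = - \<lfloor>A / P\<rfloor>"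
  define b where "b = - \<lfloor>B / P\<rfloor>"
  have PB: "P * B = of_int (iB * int p ^ lx)"
    using p1 unfolding P_def L_def iB by (simp add: power_int_add power_int_minus field_simps)
  have PA: "P * A = of_int (iA * int p ^ ly)"
    using p1 unfolding P_def L_def iA by (simp add: power_int_add power_int_minus field_simps)
  have P': "P = real p ^ (lx + ly)" unfolding P_def L_def by (metis of_nat_add power_int_of_nat)
  have PP: "P * P = of_int (int p ^ (2 * (lx + ly)))"
    unfolding P' by (simp add: mult_2 power_add)
  have prod: "trunc p x L * trunc p y L = A * B + of_int (a * iB * int p ^ lx + b * iA * int p ^ ly + a * b * int p ^ (2 * (lx + ly))) * 1"
  proof -
    have "trunc p x L * trunc p y L = A * B + of_int a * (P * B) + of_int b * (P * A) + of_int a * of_int b * (P * P)"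
      unfolding Tx Ty a_def[symmetric] b_def[symmetric] by (simp add: algebra_simps)
    then show ?thesis unfolding PB PA PP by (simp add: algebra_simps)
  qed
  have "pfrac p (pmult p x y) = (trunc p x L * trunc p y L) rmod 1"
    using pmult_lem(2)[OF p1 xQ yQ, of 0] unfolding pfrac_def L_def lx_def ly_def by simp
  also have "\<dots> = (A * B) rmod 1" unfolding prod by (rule rmod_shift)
  finally have pf: "pfrac p (pmult p x y) = (A * B) rmod 1" .
  have "2 * pi * of_int (int l * int v) / real (p ^ (M + N)) = 2 * pi * (A * B)"
    unfolding A_def B_def by (simp add: power_add)
  then show ?thesis unfolding pchi_def ee_def x_def[symmetric] y_def[symmetric] pf cis_frac by simp
qed

lemma reps_all:
  assumes p1: "1 < p"
  shows "reps p K = (\<lambda>v. pnum p v K) ` {..<p^(K+K)}"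
proof -
  have "{c \<in> reps p K. \<forall>j < - int K. c j = 0} = reps p K" by (auto simp: reps_def)
  then show ?thesis using reps_char[OF p1, of K K] by simp
qed

lemma fourier_formula:
  assumes p1: "1 < p" and f: "f \<in> DNM p N M"
  shows "fourier p f (pnum p l M) = complex_of_real (real p powi (- int M)) * Fh (p ^ (M + N)) (FF p N M f) l"
proof -
  define n where "n = p ^ (M + N)"
  have n0: "0 < n" using p1 by (simp add: n_def)
  define C where "C = complex_of_real (real p powi (- int M)) * Fh n (FF p N M f) l"
  define g where "g = (\<lambda>c. pchi p (pmult p (pnum p l M) c) * f c)"
  have seq: "(\<Sum>c\<in>reps p K. g c) * complex_of_real (real p powi (- int K)) = C" if K: "M + N \<le> K" for K
  proof -
    define R where "R = {c \<in> reps p K. \<forall>j < - int N. c j = 0}"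
    have fin: "finite (reps p K)" using reps_all[OF p1, of K] by simp
    have "(\<Sum>c\<in>reps p K. g c) = (\<Sum>c\<in>R. g c)"
    proof (rule sum.mono_neutral_right[OF fin])
      show "R \<subseteq> reps p K" by (auto simp: R_def)
      show "\<forall>c\<in>reps p K - R. g c = 0"
      proof
        fix c assume c: "c \<in> reps p K - R"
        then have cQ: "c \<in> Qp p" by (simp add: reps_def)
        have "f c = 0"
        proof (rule ccontr)
          assume "f c \<noteq> 0"
          then have "\<forall>j < - int N. c j = 0" by (rule supp_dig[OF p1 f cQ])
          then show False using c by (simp add: R_def)
        qed
        then show "g c = 0" by (simp add: g_def)
      qed
    qed
    also have "R = (\<lambda>v. pnum p v N) ` {..<p^(K+N)}" unfolding R_def using K by (intro reps_char[OF p1]) simp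
    also have "(\<Sum>c\<in>(\<lambda>v. pnum p v N) ` {..<p^(K+N)}. g c) = (\<Sum>v<p^(K+N). g (pnum p v N))"
      by (rule sum.reindex[OF pnum_inj[OF p1], unfolded comp_def])
    also have "\<dots> = (\<Sum>v<p^(K+N). ee n (int l * int v) * FF p N M f (int v))"
      unfolding g_def n_def by (simp add: pchi_pm[OF p1] phi_pnum[OF p1 f])
    also have "p^(K+N) = p^(K-M) * n" unfolding n_def using K by (simp flip: power_add)
    also have "(\<Sum>v<p^(K-M) * n. ee n (int l * int v) * FF p N M f (int v))
        = of_nat (p^(K-M)) * (\<Sum>v<n. ee n (int l * int v) * FF p N M f (int v))"
    proof (rule per_sum, rule allI)
      fix v
      have "ee n (int l * int (v + n)) = ee n (int l * int v)"
        using ee_per[OF n0, of "int l * int v" "int l"] by (simp add: algebra_simps)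
      moreover have "FF p N M f (int (v + n)) = FF p N M f (int v)"
        unfolding FF_def n_def by simp
      ultimately show "ee n (int l * int (v + n)) * FF p N M f (int (v + n)) = ee n (int l * int v) * FF p N M f (int v)"
        by simp
    qed
    also have "(\<Sum>v<n. ee n (int l * int v) * FF p N M f (int v)) = Fh n (FF p N M f) l"
      by (simp add: Fh_def)
    finally have S: "(\<Sum>c\<in>reps p K. g c) = of_nat (p^(K-M)) * Fh n (FF p N M f) l" .
    have "real (p^(K-M)) * real p powi (- int K) = real p powi (- int M)"
    proof -
      have "real (p^(K-M)) = real p powi (int K - int M)" using K by (simp add: power_int_def nat_diff_distrib)
      then show ?thesis using p1 by (simp flip: power_int_add)
    qed
    then have "complex_of_real (real (p^(K-M))) * complex_of_real (real p powi (- int K)) = complex_of_real (real p powi (- int M))"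
      by (metis of_real_mult)
    then show ?thesis unfolding S C_def by (simp add: algebra_simps)
  qed
  have "(\<lambda>K. (\<Sum>c\<in>reps p K. g c) * complex_of_real (real p powi (- int K))) \<longlonglongrightarrow> C"
    by (rule tendsto_eventually, rule eventually_sequentiallyI[of "M+N"]) (rule seq)
  then have "lim (\<lambda>K. (\<Sum>c\<in>reps p K. g c) * complex_of_real (real p powi (- int K))) = C" by (rule limI)
  then show ?thesis unfolding fourier_def pint_def g_def C_def n_def by simp
qed


lemma phi_psub:
  assumes p1: "1 < p" and f: "f \<in> DNM p N M" and x: "x \<in> Qp p" and y: "y \<in> Qp p"
  shows "f (psub p x y) = Psi p N M f (trunc p x (int M) - trunc p y (int M))"
proof -
  have "f (psub p x y) = Psi p N M f ((trunc p x (int M) - trunc p y (int M)) rmod real p powi int M)"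
    using PHI[OF p1 f psub_lem(1)[OF p1 x y]] psub_lem(2)[OF p1 x y] by simp
  also have "(trunc p x (int M) - trunc p y (int M)) rmod real p powi int M
     = (trunc p x (int M) - trunc p y (int M)) + of_int (- \<lfloor>(trunc p x (int M) - trunc p y (int M)) / real p ^ M\<rfloor>) * real p ^ M"
    using p1 by (simp add: rmod_def)
  also have "Psi p N M f \<dots> = Psi p N M f (trunc p x (int M) - trunc p y (int M))" by (rule Psi_per[OF p1])
  finally show ?thesis .
qed

lemma Psi_zero: "\<not> (\<exists>i::int. r = of_int i * real p powi (- int N)) \<Longrightarrow> Psi p N M f r = 0"
  by (simp add: Psi_def)

lemma elem_Ip:
  assumes p1: "1 < p" and r0: "0 \<le> \<rho>" and r1: "\<rho> < 1" and u: "\<rho> = of_int u / real p ^ K"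
  shows "pnum p (nat u) K \<in> Ip p" "\<forall>n\<ge>0. trunc p (pnum p (nat u) K) n = \<rho>"
proof -
  have "0 < real p ^ K" using p1 by simp
  then have "(of_int u::real) = \<rho> * real p ^ K" using u by simp
  then have "0 \<le> (of_int u::real)" using r0 \<open>0 < real p ^ K\<close> by simp
  then have u0: "0 \<le> u" by simp
  have e: "real (nat u) / real p ^ K = \<rho>" using u u0 by simp
  show T: "\<forall>n\<ge>0. trunc p (pnum p (nat u) K) n = \<rho>"
  proof (intro allI impI)
    fix n :: int assume n: "0 \<le> n"
    have "1 \<le> real p powi n" using p1 n by (simp add: power_int_def)
    then show "trunc p (pnum p (nat u) K) n = \<rho>" using pnum_lem(2)[OF p1, of "nat u" K n] e r0 r1 by simp
  qed
  have Q: "pnum p (nat u) K \<in> Qp p" by (rule pnum_lem(1)[OF p1])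
  obtain k where k: "\<forall>j<k. pnum p (nat u) K j = 0" using Qp_lb[OF Q] by blast
  have "\<forall>j\<ge>0. pnum p (nat u) K j = 0"
  proof (intro allI impI)
    fix j :: int assume j: "0 \<le> j"
    have "trunc p (pnum p (nat u) K) (j+1) = trunc p (pnum p (nat u) K) j" using T j by simp
    then show "pnum p (nat u) K j = 0" using T_step[OF k, of p j] p1 by simp
  qed
  then show "pnum p (nat u) K \<in> Ip p" using Q by (simp add: Ip_def)
qed


theorem theorem5:
  fixes p M N :: nat and \<phi> :: "padic \<Rightarrow> complex"
  assumes "prime p"
    and "\<phi> \<in> DNM p N M"
    and "card (Lset p N M \<phi>) \<le> p ^ N"
  shows "\<forall>b\<in>Qp p. \<exists>\<alpha> :: padic \<Rightarrow> complex.
           finite {a \<in> Ip p. \<alpha> a \<noteq> 0} \<and>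
           (\<forall>x\<in>Qp p. \<phi> (psub p x b) = (\<Sum>a\<in>{a \<in> Ip p. \<alpha> a \<noteq> 0}. \<alpha> a * \<phi> (psub p x a)))"
proof (intro ballI)
  fix b assume b: "b \<in> Qp p"
  have p1: "1 < p" using assms(1) by (rule prime_gt_1_nat)
  have f: "\<phi> \<in> DNM p N M" by (rule assms(2))
  define n where "n = p ^ (M + N)"
  define m where "m = p ^ N"
  have n0: "0 < n" using p1 by (simp add: n_def)
  have m0: "0 < m" using p1 by (simp add: m_def)
  define F where "F = FF p N M \<phi>"
  have "Lset p N M \<phi> = {l \<in> {0..<n}. Fh n F l \<noteq> 0}"
    unfolding Lset_def fourier_formula[OF p1 f] n_def F_def using p1 by simp
  then have card: "card {l \<in> {0..<n}. Fh n F l \<noteq> 0} \<le> m" using assms(3) by (simp add: m_def)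
  have per: "\<forall>v. F v = F (v mod int n)" by (simp add: F_def FF_def n_def)
  define \<beta>f where "\<beta>f = trunc p b 0"
  define \<beta> where "\<beta> = trunc p b (int M)"
  obtain bI where bI: "\<beta> - \<beta>f = of_int bI * real p powi 0"
    using Tdiv[OF p1 b, of 0 "int M"] unfolding pdv_def \<beta>_def \<beta>f_def by auto
  have \<beta>e: "\<beta> = \<beta>f + of_int bI" using bI by simp
  have \<beta>fb: "0 \<le> \<beta>f" "\<beta>f < 1" using Tbound[OF p1 b, of 0] unfolding \<beta>f_def by auto
  define r where "r = \<lfloor>\<beta>f * real m\<rfloor>"
  have rb: "of_int r \<le> \<beta>f * real m" "\<beta>f * real m < of_int r + 1" unfolding r_def by linarith+
  obtain \<gamma> where \<gamma>: "\<forall>s. F (s - bI * int m) = (\<Sum>j<m. \<gamma> j * F (s - int j + r))"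
    using LA[OF n0 per card, of "bI * int m" r] by blast
  define lb where "lb = lowbd b"
  define K' where "K' = max lb N"
  obtain iF where iF: "\<beta>f = of_int iF * real p powi (- int lb)"
    using Tlowdv[OF p1 b lowbd_lem[OF b], of 0] unfolding pdv_def \<beta>f_def lb_def by blast
  define \<rho> where "\<rho> = (\<lambda>j::nat. \<beta>f + (real j - of_int r) / real m)"
  define u where "u = (\<lambda>j::nat. iF * int p ^ (K' - lb) + (int j - r) * int p ^ (K' - N))"
  have \<rho>u: "\<rho> j = of_int (u j) / real p ^ K'" for j
  proof -
    have e1: "real p ^ K' = real p ^ lb * real p ^ (K' - lb)" unfolding K'_def by (simp flip: power_add)
    have e2: "real p ^ K' = real p ^ N * real p ^ (K' - N)" unfolding K'_def by (simp flip: power_add)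
    have pl: "0 < real p ^ lb" "0 < real p ^ N" using p1 by auto
    have "\<rho> j * real p ^ K' = \<beta>f * real p ^ K' + (real j - of_int r) / real p ^ N * real p ^ K'"
      unfolding \<rho>_def m_def by (simp add: algebra_simps)
    also have "\<beta>f * real p ^ K' = of_int iF * real p ^ (K' - lb)"
      unfolding iF e1 using pl p1 by (simp add: power_int_minus field_simps)
    also have "(real j - of_int r) / real p ^ N * real p ^ K' = (real j - of_int r) * real p ^ (K' - N)"
      unfolding e2 using pl p1 by (simp add: field_simps)
    finally have "\<rho> j * real p ^ K' = of_int (u j)" unfolding u_def by simp
    then show ?thesis using p1 by (simp add: field_simps)
  qed
  have \<rho>b: "0 \<le> \<rho> j \<and> \<rho> j < 1" if j: "j < m" for j
  proof -
    have "\<rho> j * real m = \<beta>f * real m - of_int r + real j" unfolding \<rho>_def using m0 by (simp add: field_simps)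
    moreover have "real j \<le> real m - 1" using j by linarith
    ultimately have "0 \<le> \<rho> j * real m" "\<rho> j * real m < 1 * real m" using rb by linarith+
    then show ?thesis using m0 by (simp add: zero_le_mult_iff mult_less_cancel_right)
  qed
  define aa where "aa = (\<lambda>j. pnum p (nat (u j)) K')"
  have aI: "aa j \<in> Ip p" "\<forall>k\<ge>0. trunc p (aa j) k = \<rho> j" if "j < m" for j
    using elem_Ip[OF p1 _ _ \<rho>u] \<rho>b[OF that] unfolding aa_def by auto
  have aQ: "aa j \<in> Qp p" if "j < m" for j using aI(1)[OF that] by (simp add: Ip_def)
  have inj: "inj_on aa {..<m}"
  proof (rule inj_onI)
    fix i j assume i: "i \<in> {..<m}" and j: "j \<in> {..<m}" and e: "aa i = aa j"
    have "\<rho> i = \<rho> j" using aI(2)[of i] aI(2)[of j] i j e by (metis lessThan_iff order_refl)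
    then show "i = j" using m0 by (simp add: \<rho>_def)
  qed
  define \<alpha> where "\<alpha> = (\<lambda>a. if a \<in> aa ` {..<m} then \<gamma> (the_inv_into {..<m} aa a) else 0)"
  have \<alpha>a: "\<alpha> (aa j) = \<gamma> j" if "j < m" for j
    using that inj by (simp add: \<alpha>_def the_inv_into_f_f)
  have sub: "{a \<in> Ip p. \<alpha> a \<noteq> 0} \<subseteq> aa ` {..<m}" by (auto simp: \<alpha>_def split: if_splits)
  have pinv: "real m * real p powi (- int N) = 1" using p1 by (simp add: m_def power_int_minus)
  show "\<exists>\<alpha> :: padic \<Rightarrow> complex. finite {a \<in> Ip p. \<alpha> a \<noteq> 0} \<and>
           (\<forall>x\<in>Qp p. \<phi> (psub p x b) = (\<Sum>a\<in>{a \<in> Ip p. \<alpha> a \<noteq> 0}. \<alpha> a * \<phi> (psub p x a)))"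
  proof (intro exI conjI ballI)
    show "finite {a \<in> Ip p. \<alpha> a \<noteq> 0}" using sub by (rule finite_subset) simp
    fix x assume x: "x \<in> Qp p"
    define t where "t = trunc p x (int M)"
    have "(\<Sum>a\<in>{a \<in> Ip p. \<alpha> a \<noteq> 0}. \<alpha> a * \<phi> (psub p x a)) = (\<Sum>a\<in>aa ` {..<m}. \<alpha> a * \<phi> (psub p x a))"
    proof (rule sum.mono_neutral_left)
      show "\<forall>a\<in>aa ` {..<m} - {a \<in> Ip p. \<alpha> a \<noteq> 0}. \<alpha> a * \<phi> (psub p x a) = 0"
        using aI(1) by auto
    qed (use sub in auto)
    also have "\<dots> = (\<Sum>j<m. \<alpha> (aa j) * \<phi> (psub p x (aa j)))"
      by (rule sum.reindex[OF inj, unfolded comp_def])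
    also have "\<dots> = (\<Sum>j<m. \<gamma> j * Psi p N M \<phi> (t - \<rho> j))"
    proof (intro sum.cong refl)
      fix j assume "j \<in> {..<m}"
      then have j: "j < m" by simp
      have "trunc p (aa j) (int M) = \<rho> j" using aI(2)[OF j] by simp
      then show "\<alpha> (aa j) * \<phi> (psub p x (aa j)) = \<gamma> j * Psi p N M \<phi> (t - \<rho> j)"
        using phi_psub[OF p1 f x aQ[OF j]] \<alpha>a[OF j] unfolding t_def by simp
    qed
    finally have R: "(\<Sum>a\<in>{a \<in> Ip p. \<alpha> a \<noteq> 0}. \<alpha> a * \<phi> (psub p x a)) = (\<Sum>j<m. \<gamma> j * Psi p N M \<phi> (t - \<rho> j))" .
    have L: "\<phi> (psub p x b) = Psi p N M \<phi> (t - \<beta>)"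
      using phi_psub[OF p1 f x b] unfolding t_def \<beta>_def by simp
    have tr: "t - \<rho> j = (t - \<beta>f) - of_int (int j - r) * real p powi (- int N)" for j
    proof -
      have "(real j - of_int r) / real m = of_int (int j - r) * real p powi (- int N)"
        using pinv m0 by (simp add: field_simps)
      then show ?thesis unfolding \<rho>_def by simp
    qed
    have tb: "t - \<beta> = (t - \<beta>f) - of_int (bI * int m) * real p powi (- int N)"
      unfolding \<beta>e using pinv by (simp add: algebra_simps)
    show "\<phi> (psub p x b) = (\<Sum>a\<in>{a \<in> Ip p. \<alpha> a \<noteq> 0}. \<alpha> a * \<phi> (psub p x a))"
      unfolding R L
    proof (cases "\<exists>s::int. t - \<beta>f = of_int s * real p powi (- int N)")
      case True
      then obtain s where s: "t - \<beta>f = of_int s * real p powi (- int N)" by blast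
      have "t - \<beta> = of_int (s - bI * int m) * real p powi (- int N)" unfolding tb s by (simp add: algebra_simps)
      then have "Psi p N M \<phi> (t - \<beta>) = F (s - bI * int m)"
        unfolding F_def by (simp only: Psi_int[OF p1])
      moreover have "Psi p N M \<phi> (t - \<rho> j) = F (s - int j + r)" for j
      proof -
        have "t - \<rho> j = of_int (s - int j + r) * real p powi (- int N)" unfolding tr s by (simp add: algebra_simps)
        then show ?thesis unfolding F_def by (simp only: Psi_int[OF p1])
      qed
      ultimately show "Psi p N M \<phi> (t - \<beta>) = (\<Sum>j<m. \<gamma> j * Psi p N M \<phi> (t - \<rho> j))"
        using \<gamma> by simp
    next
      case False
      have z1: "Psi p N M \<phi> (t - \<beta>) = 0"
      proof (rule Psi_zero, rule notI)
        assume "\<exists>i::int. t - \<beta> = of_int i * real p powi (- int N)"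
        then obtain i where "t - \<beta> = of_int i * real p powi (- int N)" by blast
        then have "t - \<beta>f = of_int (i + bI * int m) * real p powi (- int N)" unfolding tb by (simp add: algebra_simps)
        then show False using False by blast
      qed
      have z2: "Psi p N M \<phi> (t - \<rho> j) = 0" for j
      proof (rule Psi_zero, rule notI)
        assume "\<exists>i::int. t - \<rho> j = of_int i * real p powi (- int N)"
        then obtain i where "t - \<rho> j = of_int i * real p powi (- int N)" by blast
        then have "t - \<beta>f = of_int (i + (int j - r)) * real p powi (- int N)" unfolding tr by (simp add: algebra_simps)
        then show False using False by blast
      qed
      show "Psi p N M \<phi> (t - \<beta>) = (\<Sum>j<m. \<gamma> j * Psi p N M \<phi> (t - \<rho> j))"
        using z1 z2 by simp
    qed
  qed
qed

end
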